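(* Let $N\in\mathbb{N}$. Let $$\widehat{\mathcal{B}_1'}(N)=\{(q_1',q_2')\in\mathbb{Z}^2 \mid 2q_1'^2+2q_2'^2+q_2'=N\},$$ let $M'=\{(q_1',q_2')\in\mathbb{Z}^2\mid q_1'+q_2'\text{ even}\}$ and $L'=\mathbb{Z}^2$, let $\mathcal{U}(8N+1)=\{(x,y)\in\mathbb{Z}^2\mid x^2+y^2=8N+1\}$, and let $\varphi:\widehat{\mathcal{B}_1'}(N)\to \mathcal{U}(8N+1)$ be the (well-defined) map $\varphi(q_1',q_2')=(4q_1',\,4q_2'+1)$. Let the cyclic group $C_4=\langle r\rangle$ act on $\mathcal{U}(8N+1)$ by $r(x,y)=(-y,x)$. Then: (1) the action of $C_4$ on $\mathcal{U}(8N+1)$ is free; (2) the sets $\varphi(\widehat{\mathcal{B}_1'}(N)\cap M')$ and $\varphi(\widehat{\mathcal{B}_1'}(N)\cap (L'\setminus M'))$ are disjoint, and $\varphi(\widehat{\mathcal{B}_1'}(N))$ is a complete set of representatives of the $C_4$-orbits of $\mathcal{U}(8N+1)$.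
   Context: The expression $2q_1'^2+2q_2'^2+q_2'$ is the $\Lambda_1$-atomic length of the translation $t_q$ in the extended affine Weyl group of type $C_2^{(1)}$, for $q$ in the coweight lattice $L=\{\sqrt2 q_1\varepsilon_1+\sqrt2 q_2\varepsilon_2\mid q_1,q_2\in\frac12\mathbb{Z}\}$, rewritten in the coordinates $(q_1',q_2')=(q_1+q_2,q_1-q_2)$; $M'$ corresponds to the sublattice $M=\sqrt2\mathbb{Z}\varepsilon_1\oplus\sqrt2\mathbb{Z}\varepsilon_2$. *)

theory Defs
  imports Main
begin

definition Bhat1 :: "nat \<Rightarrow> (int \<times> int) set" where
  "Bhat1 N = {(q1, q2). 2 * q1^2 + 2 * q2^2 + q2 = int N}"

text \<open>The sublattice M' = {(q1',q2') in Z^2 | q1'+q2' even}; L' = Z^2 is UNIV.\<close>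
definition Mprime :: "(int \<times> int) set" where
  "Mprime = {(q1, q2). even (q1 + q2)}"

definition U :: "int \<Rightarrow> (int \<times> int) set" where
  "U m = {(x, y). x^2 + y^2 = m}"

definition phi :: "int \<times> int \<Rightarrow> int \<times> int" where
  "phi q = (4 * fst q, 4 * snd q + 1)"

text \<open>The generator r of C_4 acting by r(x,y) = (-y,x); r^k acts as rot ^^ k.\<close>
definition rot :: "int \<times> int \<Rightarrow> int \<times> int" where
  "rot p = (- snd p, fst p)"

definition C4_orbit :: "int \<times> int \<Rightarrow> (int \<times> int) set" where
  "C4_orbit p = {(rot ^^ k) p | k. k < 4}"

end

theory Submission imports Defs begin
lemma key:
  fixes x y :: int
  assumes "x^2 + y^2 = 8 * n + 1"
  shows "(x mod 4 = 0 \<and> odd y) \<or> (y mod 4 = 0 \<and> odd x)"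
proof -
  have "(x^2 + y^2) mod 8 = ((x mod 8)^2 + (y mod 8)^2) mod 8"
    by (metis mod_add_eq power_mod)
  hence h: "((x mod 8)^2 + (y mod 8)^2) mod 8 = 1" using assms by simp
  have x4: "x mod 4 = (x mod 8) mod 4" by (simp add: mod_mod_cancel)
  have y4: "y mod 4 = (y mod 8) mod 4" by (simp add: mod_mod_cancel)
  have ox: "odd x \<longleftrightarrow> odd (x mod 8)" by presburger
  have oy: "odd y \<longleftrightarrow> odd (y mod 8)" by presburger
  have "x mod 8 \<in> {0,1,2,3,4,5,6,7}" by (simp; presburger)
  moreover have "y mod 8 \<in> {0,1,2,3,4,5,6,7}" by (simp; presburger)
  ultimately show ?thesis unfolding x4 y4 ox oy using h by auto
qed

lemma phi_img:
  "s \<in> phi ` Bhat1 N \<longleftrightarrow> fst s ^2 + snd s ^2 = 8 * int N + 1 \<and> fst s mod 4 = 0 \<and> snd s mod 4 = 1"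
proof
  assume "s \<in> phi ` Bhat1 N"
  then obtain a b where "s = (4*a, 4*b+1)" "2*a^2+2*b^2+b = int N"
    by (auto simp: phi_def Bhat1_def)
  then show "fst s ^2 + snd s ^2 = 8 * int N + 1 \<and> fst s mod 4 = 0 \<and> snd s mod 4 = 1"
    by (auto simp: power2_eq_square algebra_simps)
next
  assume h: "fst s ^2 + snd s ^2 = 8 * int N + 1 \<and> fst s mod 4 = 0 \<and> snd s mod 4 = 1"
  obtain x y where s: "s = (x,y)" by force
  obtain a where a: "x = 4*a" using h s by auto
  obtain b where b: "y = 4*b+1" using h s by (metis fst_conv snd_conv mod_div_mult_eq add.commute mult.commute)
  have "8*(2*a^2+2*b^2+b) + 1 = 8 * int N + 1" using h s a b by (simp add: power2_eq_square algebra_simps)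
  hence "(a,b) \<in> Bhat1 N" by (simp add: Bhat1_def)
  moreover have "s = phi (a,b)" by (simp add: phi_def s a b)
  ultimately show "s \<in> phi ` Bhat1 N" by blast
qed

lemma orbit: "C4_orbit (x,y) = {(x,y),(-y,x),(-x,-y),(y,-x)}"
proof -
  have "{k::nat. k<4} = {0,1,2,3}" by auto
  then have "C4_orbit (x,y) = (\<lambda>k. (rot ^^ k) (x,y)) ` {0,1,2,3}" unfolding C4_orbit_def by blast
  then show ?thesis by (simp add: rot_def numeral_eq_Suc)
qed

lemma sel:
  fixes x y :: int assumes x: "x mod 4 = 0" and y: "odd y"
  shows "\<exists>!s. s \<in> {(x,y),(-y,x),(-x,-y),(y,-x)} \<and> fst s mod 4 = 0 \<and> snd s mod 4 = 1"
proof (cases "y mod 4 = 1")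
  case True
  show ?thesis
  proof (rule ex1I[of _ "(x,y)"])
    show "(x,y) \<in> {(x,y),(-y,x),(-x,-y),(y,-x)} \<and> fst (x,y) mod 4 = 0 \<and> snd (x,y) mod 4 = 1"
      using x True by simp
  next
    fix s assume s: "s \<in> {(x,y),(-y,x),(-x,-y),(y,-x)} \<and> fst s mod 4 = 0 \<and> snd s mod 4 = 1"
    have a: "(-y) mod 4 \<noteq> 0" using y by presburger
    have b: "(-y) mod 4 \<noteq> 1" using True by presburger
    have c: "y mod 4 \<noteq> 0" using y by presburger
    show "s = (x,y)" using s a b c by auto
  qed
next
  case False
  hence y3: "y mod 4 = 3" using y by presburger
  show ?thesis
  proof (rule ex1I[of _ "(-x,-y)"])
    have "(-y) mod 4 = 1" using y3 by presburger
    moreover have "(-x) mod 4 = 0" using x by presburger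
    ultimately show "(-x,-y) \<in> {(x,y),(-y,x),(-x,-y),(y,-x)} \<and> fst (-x,-y) mod 4 = 0 \<and> snd (-x,-y) mod 4 = 1"
      by simp
  next
    fix s assume s: "s \<in> {(x,y),(-y,x),(-x,-y),(y,-x)} \<and> fst s mod 4 = 0 \<and> snd s mod 4 = 1"
    have a: "(-y) mod 4 \<noteq> 0" using y by presburger
    have c: "y mod 4 \<noteq> 0" using y by presburger
    show "s = (-x,-y)" using s a c False by auto
  qed
qed

theorem theorem8p12:
  fixes N :: nat
  shows "(\<forall>u \<in> U (8 * int N + 1). \<forall>k::nat. 0 < k \<and> k < 4 \<longrightarrow> (rot ^^ k) u \<noteq> u)
    \<and> phi ` (Bhat1 N \<inter> Mprime) \<inter> phi ` (Bhat1 N \<inter> (UNIV - Mprime)) = {}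
    \<and> phi ` (Bhat1 N) \<subseteq> U (8 * int N + 1)
    \<and> (\<forall>u \<in> U (8 * int N + 1). \<exists>!s. s \<in> phi ` (Bhat1 N) \<and> s \<in> C4_orbit u)"
proof (intro conjI ballI allI impI)
  fix u k assume u: "u \<in> U (8 * int N + 1)" and k: "0 < k \<and> k < (4::nat)"
  obtain x y where xy: "u = (x,y)" by force
  have "(x,y) \<noteq> (0,0)" using u xy by (auto simp: U_def)
  moreover have "k = 1 \<or> k = 2 \<or> k = 3" using k by auto
  ultimately show "(rot ^^ k) u \<noteq> u" using xy by (auto simp: rot_def numeral_eq_Suc)
next
  have "inj phi" by (auto simp: inj_def phi_def)
  then show "phi ` (Bhat1 N \<inter> Mprime) \<inter> phi ` (Bhat1 N \<inter> (UNIV - Mprime)) = {}"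
    by (auto dest: injD)
next
  show "phi ` (Bhat1 N) \<subseteq> U (8 * int N + 1)"
  proof
    fix s assume "s \<in> phi ` Bhat1 N"
    then have "fst s ^2 + snd s ^2 = 8 * int N + 1" using phi_img by blast
    then show "s \<in> U (8 * int N + 1)" by (cases s) (simp add: U_def)
  qed
next
  fix u assume u: "u \<in> U (8 * int N + 1)"
  obtain x y where xy: "u = (x,y)" by force
  have e: "x^2+y^2 = 8 * int N + 1" using u xy by (simp add: U_def)
  have e2: "(-y)^2+x^2 = 8 * int N + 1" "(-x)^2+(-y)^2 = 8 * int N + 1" "y^2+(-x)^2 = 8 * int N + 1"
    using e by (simp_all add: algebra_simps)
  have ne: "(x,y) \<noteq> (0,0)" using e by auto
  have P: "\<And>s. s \<in> C4_orbit (x,y) \<Longrightarrow> fst s ^2 + snd s ^2 = 8 * int N + 1"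
    unfolding orbit using e e2 by auto
  have "\<exists>!s. s \<in> C4_orbit (x,y) \<and> fst s mod 4 = 0 \<and> snd s mod 4 = 1"
    using key[OF e]
  proof
    assume "x mod 4 = 0 \<and> odd y"
    then have "x mod 4 = 0" "odd y" by auto
    from sel[OF this] show ?thesis unfolding orbit .
  next
    assume h: "y mod 4 = 0 \<and> odd x"
    have h1: "y mod 4 = 0" "odd (-x)" using h by auto
    have eq: "{(y,-x),(- (-x),y),(-y,- (-x)),(-x,-y)} = C4_orbit (x,y)" unfolding orbit by auto
    from sel[OF h1] show ?thesis unfolding eq .
  qed
  then obtain s0 where s0: "s0 \<in> C4_orbit (x,y) \<and> fst s0 mod 4 = 0 \<and> snd s0 mod 4 = 1"
    and un: "\<And>s. s \<in> C4_orbit (x,y) \<and> fst s mod 4 = 0 \<and> snd s mod 4 = 1 \<Longrightarrow> s = s0"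
    by (metis (no_types, lifting))
  show "\<exists>!s. s \<in> phi ` (Bhat1 N) \<and> s \<in> C4_orbit u"
    unfolding xy phi_img
  proof (rule ex1I[of _ s0])
    show "((fst s0)\<^sup>2 + (snd s0)\<^sup>2 = 8 * int N + 1 \<and> fst s0 mod 4 = 0 \<and> snd s0 mod 4 = 1) \<and> s0 \<in> C4_orbit (x, y)"
      using s0 P by blast
  next
    fix s assume "((fst s)\<^sup>2 + (snd s)\<^sup>2 = 8 * int N + 1 \<and> fst s mod 4 = 0 \<and> snd s mod 4 = 1) \<and> s \<in> C4_orbit (x, y)"
    then have "s \<in> C4_orbit (x,y) \<and> fst s mod 4 = 0 \<and> snd s mod 4 = 1" by simp
    then show "s = s0" by (rule un)
  qed
qed
end
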